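(* Let $(M_1,M_2)$ be a state of a duplex network, fix $\ell\in\{1,2\}$, and let $\mathcal P=\big((v_0\xrightarrow{\ell_1}v_1),\dots,(v_{k-1}\xrightarrow{\ell_k}v_k)\big)$ be a CLAP (with chosen witness paths) of minimum length among all CLAPs with endpoints $(v_0,v_k)$. If there exist $i<j$ with $\ell_i=\ell_j=\ell$ such that the witness alternating paths of the $i$-th and $j$-th segments share at least one edge, then there exists another CLAP between $v_0$ and $v_k$ with strictly fewer segments.
   Context: A duplex network consists of directed graphs $G_1=(V,E_1)$, $G_2=(V,E_2)$ on a common finite node set $V$. For $\ell\in\{1,2\}$, $\mathcal B_\ell$ is the bipartite graph with vertex classes $V^+=\{v^+\}$, $V^-=\{v^-\}$ and an edge $\{u^+,v^-\}$ for each $(u,v)\in E_\ell$. A state is a pair of matchings $M_\ell$ in $\mathcal B_\ell$; $D_\ell=\{v\in V: v^-\text{ uncovered by }M_\ell\}$, $\mathrm{DD}_1=D_1\setminus D_2$, $\mathrm{DD}_2=D_2\setminus D_1$. An admissible segment $(u\xrightarrow{\ell}v)$ requires an $M_\ell$-alternating path (simple path in $\mathcal B_\ell$ alternating between $M_\ell$ and non-$M_\ell$ edges) between $u^-$ and $v^-$, called a witness path, and: for $\ell=1$, $u\in D_1$, $v\notin D_1$; for $\ell=2$, $u\notin D_2$, $v\in D_2$. A CLAP is a sequence of admissible segments $v_0\xrightarrow{\ell_1}v_1\cdots\xrightarrow{\ell_k}v_k$ with $v_0\in\mathrm{DD}_1$, $v_k\in\mathrm{DD}_2$, $\ell_{i+1}\ne\ell_i$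 for all $i$, and $v_0,\dots,v_k$ pairwise distinct; its length is the number $k$ of segments. *)

theory Defs
  imports Main
begin

text \<open>Vertices of the bipartite graph B_l: Pl v is v^+, Mi v is v^-.\<close>
datatype 'v bvert = Pl 'v | Mi 'v

text \<open>The directed graph G_l is given by its arc set E :: ('v * 'v) set; the arc (u,v)
  corresponds to the undirected edge {u^+, v^-} of B_l.\<close>

definition bip_edge :: "('v \<times> 'v) set \<Rightarrow> 'v bvert \<Rightarrow> 'v bvert \<Rightarrow> bool" where
  "bip_edge E a b \<longleftrightarrow> (\<exists>u v. (u, v) \<in> E \<and> {a, b} = {Pl u, Mi v})"

definition is_matching :: "('v \<times> 'v) set \<Rightarrow> ('v \<times> 'v) set \<Rightarrow> bool" where
  "is_matching E M \<longleftrightarrow> M \<subseteq> E \<and>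
     (\<forall>a b c d. (a, b) \<in> M \<and> (c, d) \<in> M \<and> (a = c \<or> b = d) \<longrightarrow> (a, b) = (c, d))"

text \<open>Uncovered minus-vertices: D = {v in V. v^- not covered by M}.\<close>
definition uncovered :: "'v set \<Rightarrow> ('v \<times> 'v) set \<Rightarrow> 'v set" where
  "uncovered V M = {v \<in> V. \<not> (\<exists>u. (u, v) \<in> M)}"

definition path_edges :: "'v bvert list \<Rightarrow> 'v bvert set set" where
  "path_edges p = {{p ! n, p ! Suc n} | n. Suc n < length p}"

definition alt_path :: "('v \<times> 'v) set \<Rightarrow> ('v \<times> 'v) set \<Rightarrow> 'v bvert list \<Rightarrow> 'v \<Rightarrow> 'v \<Rightarrow> bool" where
  "alt_path E M p u v \<longleftrightarrow>
     p \<noteq> [] \<and> hd p = Mi u \<and> last p = Mi v \<and> distinct p \<and>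
     (\<forall>n. Suc n < length p \<longrightarrow> bip_edge E (p ! n) (p ! Suc n)) \<and>
     (\<forall>n. Suc (Suc n) < length p \<longrightarrow>
        (bip_edge M (p ! n) (p ! Suc n) \<longleftrightarrow> \<not> bip_edge M (p ! Suc n) (p ! Suc (Suc n))))"

definition lay :: "nat \<Rightarrow> 'a \<Rightarrow> 'a \<Rightarrow> 'a" where
  "lay l x1 x2 = (if l = 1 then x1 else x2)"

definition admissible_seg ::
  "'v set \<Rightarrow> ('v \<times> 'v) set \<Rightarrow> ('v \<times> 'v) set \<Rightarrow> ('v \<times> 'v) set \<Rightarrow> ('v \<times> 'v) set \<Rightarrow>
   'v \<Rightarrow> nat \<Rightarrow> 'v \<Rightarrow> 'v bvert list \<Rightarrow> bool" where
  "admissible_seg V E1 E2 M1 M2 u l v p \<longleftrightarrow>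
     l \<in> {1, 2} \<and> u \<in> V \<and> v \<in> V \<and>
     alt_path (lay l E1 E2) (lay l M1 M2) p u v \<and>
     (l = 1 \<longrightarrow> u \<in> uncovered V M1 \<and> v \<notin> uncovered V M1) \<and>
     (l = 2 \<longrightarrow> u \<notin> uncovered V M2 \<and> v \<in> uncovered V M2)"

text \<open>CLAP with chosen witness paths: vertices vs = [v_0,...,v_k], layers
  ls = [l_1,...,l_k], witness paths ps (all 0-indexed).\<close>
definition clap_w ::
  "'v set \<Rightarrow> ('v \<times> 'v) set \<Rightarrow> ('v \<times> 'v) set \<Rightarrow> ('v \<times> 'v) set \<Rightarrow> ('v \<times> 'v) set \<Rightarrow>
   'v list \<Rightarrow> nat list \<Rightarrow> 'v bvert list list \<Rightarrow> bool" where
  "clap_w V E1 E2 M1 M2 vs ls ps \<longleftrightarrow>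
     length vs = Suc (length ls) \<and> length ps = length ls \<and>
     (\<forall>i < length ls. admissible_seg V E1 E2 M1 M2 (vs ! i) (ls ! i) (vs ! Suc i) (ps ! i)) \<and>
     hd vs \<in> uncovered V M1 - uncovered V M2 \<and>
     last vs \<in> uncovered V M2 - uncovered V M1 \<and>
     (\<forall>i. Suc i < length ls \<longrightarrow> ls ! Suc i \<noteq> ls ! i) \<and>
     distinct vs"

definition clap ::
  "'v set \<Rightarrow> ('v \<times> 'v) set \<Rightarrow> ('v \<times> 'v) set \<Rightarrow> ('v \<times> 'v) set \<Rightarrow> ('v \<times> 'v) set \<Rightarrow>
   'v list \<Rightarrow> nat list \<Rightarrow> bool" where
  "clap V E1 E2 M1 M2 vs ls \<longleftrightarrow> (\<exists>ps. clap_w V E1 E2 M1 M2 vs ls ps)"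

end

theory Submission
  imports Defs
begin

fun isPl :: "'v bvert \<Rightarrow> bool" where
  "isPl (Pl _) = True" | "isPl (Mi _) = False"

lemma bip_side: "bip_edge E a b \<Longrightarrow> isPl a \<longleftrightarrow> \<not> isPl b"
  unfolding bip_edge_def
  by (cases a; cases b) (auto simp: doubleton_eq_iff)

lemma bip_sym: "bip_edge E a b = bip_edge E b a"
  unfolding bip_edge_def by (auto simp: insert_commute)

lemma M_start: "bip_edge M (Mi a) b \<Longrightarrow> \<exists>w. (w,a) \<in> M"
  unfolding bip_edge_def by (auto simp: doubleton_eq_iff)

definition G :: "('v \<times> 'v) set \<Rightarrow> ('v \<times> 'v) set \<Rightarrow> 'v bvert list \<Rightarrow> bool" where
  "G E M p \<longleftrightarrow> (\<forall>n. Suc n < length p \<longrightarrow> bip_edge E (p!n) (p!Suc n) \<and>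
      (bip_edge M (p!n) (p!Suc n) \<longleftrightarrow> isPl (p!n)))"

lemma alt_G:
  assumes "alt_path E M p a b" "\<forall>w. (w,a) \<notin> M"
  shows "G E M p"
proof -
  have E: "\<And>n. Suc n < length p \<Longrightarrow> bip_edge E (p!n) (p!Suc n)"
    using assms(1) unfolding alt_path_def by blast
  have "Suc n < length p \<longrightarrow> (bip_edge M (p!n) (p!Suc n) \<longleftrightarrow> isPl (p!n))" for n
  proof (induction n)
    case 0
    have "p!0 = Mi a" using assms(1) unfolding alt_path_def by (metis hd_conv_nth)
    then show ?case using M_start[of M a] assms(2) by auto
  next
    case (Suc n)
    show ?case
    proof
      assume a: "Suc (Suc n) < length p"
      have "bip_edge M (p ! n) (p ! Suc n) \<longleftrightarrow> \<not> bip_edge M (p ! Suc n) (p ! Suc (Suc n))"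
        using assms(1) a unfolding alt_path_def by blast
      moreover have "isPl (p!n) \<longleftrightarrow> \<not> isPl (p!Suc n)" using bip_side E a by (meson Suc_lessD)
      ultimately show "bip_edge M (p!Suc n) (p!Suc (Suc n)) \<longleftrightarrow> isPl (p!Suc n)"
        using Suc a by auto
    qed
  qed
  then show ?thesis using E unfolding G_def by blast
qed

lemma G_alt:
  assumes "G E M p" "p \<noteq> []" "hd p = Mi a" "last p = Mi b" "distinct p"
  shows "alt_path E M p a b"
  unfolding alt_path_def
proof (intro conjI allI impI)
  fix n assume "Suc n < length p" then show "bip_edge E (p!n) (p!Suc n)"
    using assms(1) unfolding G_def by blast
next
  fix n assume a: "Suc (Suc n) < length p"
  have "bip_edge E (p!Suc n) (p!Suc (Suc n))" using assms(1) a unfolding G_def by blast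
  then have "isPl (p!Suc n) \<longleftrightarrow> \<not> isPl (p!Suc (Suc n))" using bip_side by blast
  then show "bip_edge M (p ! n) (p ! Suc n) = (\<not> bip_edge M (p ! Suc n) (p ! Suc (Suc n)))"
    using assms(1) a unfolding G_def
    by (metis Suc_lessD bip_side)
qed (use assms in auto)

lemma alt_rev:
  assumes "alt_path E M p u v"
  shows "alt_path E M (rev p) v u"
  unfolding alt_path_def
proof (intro conjI allI impI)
  fix n assume a: "Suc n < length (rev p)"
  have "bip_edge E (p!(length p - Suc (Suc n))) (p!Suc (length p - Suc (Suc n)))"
    using assms a unfolding alt_path_def by auto
  moreover have "Suc (length p - Suc (Suc n)) = length p - Suc n" using a by simp
  ultimately show "bip_edge E (rev p ! n) (rev p ! Suc n)"
    using a by (simp add: rev_nth bip_sym)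
next
  fix n assume a: "Suc (Suc n) < length (rev p)"
  define m where "m = length p - Suc (Suc (Suc n))"
  have m1: "length p - Suc n = Suc (Suc m)" "length p - Suc (Suc n) = Suc m" "Suc (Suc m) < length p"
    using a by (auto simp: m_def)
  have "bip_edge M (p ! m) (p ! Suc m) \<longleftrightarrow> \<not> bip_edge M (p ! Suc m) (p ! Suc (Suc m))"
    using assms m1 unfolding alt_path_def by blast
  show "bip_edge M (rev p ! n) (rev p ! Suc n) = (\<not> bip_edge M (rev p ! Suc n) (rev p ! Suc (Suc n)))"
  proof -
    have r: "rev p ! n = p ! Suc (Suc m)" "rev p ! Suc n = p ! Suc m" "rev p ! Suc (Suc n) = p ! m"
      using a m1 by (simp_all add: rev_nth m_def)
    show ?thesis unfolding r using \<open>bip_edge M (p ! m) (p ! Suc m) \<longleftrightarrow> _\<close> bip_sym by metis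
  qed
qed (use assms in \<open>auto simp: alt_path_def hd_rev last_rev\<close>)

lemma G_splice:
  assumes "G E M p" "G E M q" "a < length p" "b < length q" "p!a = q!b"
  shows "G E M (take a p @ drop b q)"
  unfolding G_def
proof (intro allI impI)
  fix n assume n: "Suc n < length (take a p @ drop b q)"
  show "bip_edge E ((take a p @ drop b q) ! n) ((take a p @ drop b q) ! Suc n) \<and>
         bip_edge M ((take a p @ drop b q) ! n) ((take a p @ drop b q) ! Suc n) =
         isPl ((take a p @ drop b q) ! n)"
  proof (cases "Suc n < a")
    case True
    then show ?thesis using assms n by (simp add: nth_append G_def)
  next
    case F: False
    show ?thesis
    proof (cases "Suc n = a")
      case True
      then have "(take a p @ drop b q) ! n = p ! n" "(take a p @ drop b q) ! Suc n = p ! Suc n"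
        using assms n by (simp_all add: nth_append)
      then show ?thesis using assms(1,3) True unfolding G_def by metis
    next
      case False
      with F have "a \<le> n" by simp
      then have e: "(take a p @ drop b q) ! n = q ! (b + (n - a))"
          "(take a p @ drop b q) ! Suc n = q ! Suc (b + (n - a))"
        using assms(3,4) n by (simp_all add: nth_append Suc_diff_le)
      have "Suc (b + (n - a)) < length q" using n assms(3,4) \<open>a \<le> n\<close> by simp
      then show ?thesis using assms(2) unfolding e G_def by blast
    qed
  qed
qed

lemma splice:
  assumes p: "alt_path E M p a b" "\<forall>w. (w,a) \<notin> M"
    and q: "alt_path E M q c d" "\<forall>w. (w,c) \<notin> M"
    and common: "set p \<inter> set q \<noteq> {}"
  shows "\<exists>r. alt_path E M r a d"
proof -
  define k where "k = (LEAST k. k < length p \<and> p!k \<in> set q)"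
  have ex: "\<exists>k. k < length p \<and> p!k \<in> set q" using common by (auto simp: in_set_conv_nth)
  have k: "k < length p" "p!k \<in> set q" using LeastI_ex[OF ex] unfolding k_def by auto
  have kmin: "\<And>m. m < k \<Longrightarrow> p!m \<notin> set q"
  proof -
    fix m assume m: "m < k"
    then have "\<not> (m < length p \<and> p!m \<in> set q)"
      using not_less_Least[of m "\<lambda>k. k < length p \<and> p!k \<in> set q"] unfolding k_def by blast
    then show "p!m \<notin> set q" using m k(1) by simp
  qed
  obtain b' where b': "b' < length q" "q!b' = p!k" using k(2) by (auto simp: in_set_conv_nth)
  define r where "r = take k p @ drop b' q"
  have G: "G E M r" unfolding r_def
    using G_splice[OF alt_G[OF p] alt_G[OF q] k(1) b'(1)] b' by simp
  have dp: "distinct p" "distinct q" using p q unfolding alt_path_def by auto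
  have disj: "set (take k p) \<inter> set (drop b' q) = {}"
  proof -
    have "set (take k p) \<inter> set q = {}"
      using kmin k(1) by (auto simp: in_set_conv_nth)
    then show ?thesis using set_drop_subset[of b' q] by blast
  qed
  have dr: "distinct r" unfolding r_def using dp disj by simp
  have ne: "drop b' q \<noteq> []" using b' by simp
  have lr: "last r = Mi d" unfolding r_def using ne q(1) unfolding alt_path_def by simp
  have hr: "hd r = Mi a"
  proof (cases k)
    case 0
    then have "hd r = q!b'" unfolding r_def using b' by (simp add: hd_drop_conv_nth)
    also have "\<dots> = p!0" using b' 0 by simp
    also have "\<dots> = Mi a" using p(1) unfolding alt_path_def by (metis hd_conv_nth)
    finally show ?thesis .
  next
    case (Suc m)
    have "p \<noteq> []" using k(1) by auto
    moreover have "take k p \<noteq> []" using Suc \<open>p \<noteq> []\<close> by simp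
    ultimately have "hd r = hd p" unfolding r_def using Suc by (simp add: hd_append2 hd_take)
    then show ?thesis using p(1) unfolding alt_path_def by simp
  qed
  have "r \<noteq> []" using ne unfolding r_def by simp
  then show ?thesis using G_alt[OF G _ hr lr dr] by blast
qed


lemma common_vertex:
  assumes "path_edges p \<inter> path_edges q \<noteq> {}"
  shows "set p \<inter> set q \<noteq> {}"
proof -
  obtain n m where nm: "Suc n < length p" "Suc m < length q"
    "{p!n, p!Suc n} = {q!m, q!Suc m}"
    using assms unfolding path_edges_def by blast
  have "p!n \<in> set p" using nm(1) by simp
  moreover have "p!n \<in> set q" using nm
    by (metis Suc_lessD insertE insertI1 nth_mem singletonD)
  ultimately show ?thesis by blast
qed

lemma distinct_take_drop:
  assumes "distinct xs" "a \<le> b"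
  shows "distinct (take a xs @ drop b xs)"
proof -
  have "distinct (take b xs @ drop b xs)" using assms by simp
  then have "set (take b xs) \<inter> set (drop b xs) = {}" "distinct (drop b xs)" unfolding distinct_append by blast+
  moreover have "set (take a xs) \<subseteq> set (take b xs)" using assms(2) by (rule set_take_subset_set_take)
  moreover have "distinct (take a xs)" using assms by simp
  ultimately show ?thesis by auto
qed

lemma nth_cut1:
  assumes "i < j" "j < length xs" "k < length (take (Suc i) xs @ drop (Suc j) xs)"
  shows "(take (Suc i) xs @ drop (Suc j) xs) ! k = (if k \<le> i then xs ! k else xs ! (k + (j - i)))"
  using assms by (auto simp: nth_append min_def) (auto intro!: arg_cong[where f="(!) xs"])

lemma nth_cut2:
  assumes "i < j" "j < length xs" "k < length (take i xs @ y # drop (Suc j) xs)"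
  shows "(take i xs @ y # drop (Suc j) xs) ! k =
     (if k < i then xs ! k else if k = i then y else xs ! (k + (j - i)))"
  using assms by (auto simp: nth_append min_def nth_Cons split: nat.split) (auto intro!: arg_cong[where f="(!) xs"])


theorem mainTheorem4:
  fixes V :: "'v set" and E1 E2 M1 M2 :: "('v \<times> 'v) set"
    and vs :: "'v list" and ls :: "nat list" and ps :: "'v bvert list list"
    and l i j :: nat
  assumes "finite V" and "E1 \<subseteq> V \<times> V" and "E2 \<subseteq> V \<times> V"
    and "is_matching E1 M1" and "is_matching E2 M2"
    and "clap_w V E1 E2 M1 M2 vs ls ps"
    and "\<forall>vs' ls'. clap V E1 E2 M1 M2 vs' ls' \<and> hd vs' = hd vs \<and> last vs' = last vs
           \<longrightarrow> length ls \<le> length ls'"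
    and "l \<in> {1, 2}"
    and "i < j" and "j < length ls" and "ls ! i = l" and "ls ! j = l"
    and "path_edges (ps ! i) \<inter> path_edges (ps ! j) \<noteq> {}"
  shows "\<exists>vs' ls'. clap V E1 E2 M1 M2 vs' ls' \<and> hd vs' = hd vs \<and> last vs' = last vs
           \<and> length ls' < length ls"
proof -
  note cw = assms(6)[unfolded clap_w_def]
  have len: "length vs = Suc (length ls)" "length ps = length ls" using cw by auto
  have seg: "\<And>k. k < length ls \<Longrightarrow> admissible_seg V E1 E2 M1 M2 (vs ! k) (ls ! k) (vs ! Suc k) (ps ! k)"
    using cw by blast
  have si: "admissible_seg V E1 E2 M1 M2 (vs ! i) l (vs ! Suc i) (ps ! i)"
    using seg[of i] assms(9,10,11) by simp
  have sj: "admissible_seg V E1 E2 M1 M2 (vs ! j) l (vs ! Suc j) (ps ! j)"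
    using seg[of j] assms(10,12) by simp
  have com: "set (ps ! i) \<inter> set (ps ! j) \<noteq> {}" using common_vertex assms(13) by blast
  obtain r where r: "alt_path (lay l E1 E2) (lay l M1 M2) r (vs ! i) (vs ! Suc j)"
  proof (cases "l = 1")
    case True
    have a: "alt_path E1 M1 (ps ! i) (vs ! i) (vs ! Suc i)" "\<forall>w. (w, vs ! i) \<notin> M1"
      using si True by (auto simp: admissible_seg_def lay_def uncovered_def)
    have b: "alt_path E1 M1 (ps ! j) (vs ! j) (vs ! Suc j)" "\<forall>w. (w, vs ! j) \<notin> M1"
      using sj True by (auto simp: admissible_seg_def lay_def uncovered_def)
    from splice[OF a b com] True that show ?thesis by (auto simp: lay_def)
  next
    case False
    have a: "alt_path E2 M2 (rev (ps ! i)) (vs ! Suc i) (vs ! i)" "\<forall>w. (w, vs ! Suc i) \<notin> M2"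
      using si False alt_rev by (auto simp: admissible_seg_def lay_def uncovered_def)
    have b: "alt_path E2 M2 (rev (ps ! j)) (vs ! Suc j) (vs ! j)" "\<forall>w. (w, vs ! Suc j) \<notin> M2"
      using sj False alt_rev by (auto simp: admissible_seg_def lay_def uncovered_def)
    have com': "set (rev (ps ! j)) \<inter> set (rev (ps ! i)) \<noteq> {}" using com by auto
    from splice[OF b a com'] obtain r' where "alt_path E2 M2 r' (vs ! Suc j) (vs ! i)" by blast
    from alt_rev[OF this] False that show ?thesis by (auto simp: lay_def)
  qed
  define vs' where "vs' = take (Suc i) vs @ drop (Suc j) vs"
  define ls' where "ls' = take i ls @ l # drop (Suc j) ls"
  define ps' where "ps' = take i ps @ r # drop (Suc j) ps"
  have lvs': "length vs' = Suc (length ls')" and lps': "length ps' = length ls'"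
    using len assms(9,10) by (auto simp: vs'_def ls'_def ps'_def)
  have lls': "length ls' < length ls" using assms(9,10) by (auto simp: ls'_def)
  have jv: "j < length vs" "j < length ps" using len assms(10) by auto
  have nv: "\<And>k. k < length vs' \<Longrightarrow> vs' ! k = (if k \<le> i then vs ! k else vs ! (k + (j - i)))"
    unfolding vs'_def using nth_cut1[OF assms(9) jv(1)] by (simp add: vs'_def)
  have nl: "\<And>k. k < length ls' \<Longrightarrow> ls' ! k = (if k < i then ls ! k else if k = i then l else ls ! (k + (j - i)))"
    unfolding ls'_def using nth_cut2[OF assms(9) assms(10)] by (simp add: ls'_def)
  have np: "\<And>k. k < length ps' \<Longrightarrow> ps' ! k = (if k < i then ps ! k else if k = i then r else ps ! (k + (j - i)))"
    unfolding ps'_def using nth_cut2[OF assms(9) jv(2)] by (simp add: ps'_def)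
  have "clap_w V E1 E2 M1 M2 vs' ls' ps'"
    unfolding clap_w_def
  proof (intro conjI allI impI)
    show "length vs' = Suc (length ls')" "length ps' = length ls'" by fact+
  next
    fix k assume k: "k < length ls'"
    show "admissible_seg V E1 E2 M1 M2 (vs' ! k) (ls' ! k) (vs' ! Suc k) (ps' ! k)"
    proof (cases "k < i")
      case True
      then show ?thesis using nv nl np k lvs' lps' seg[of k] assms(9,10) by simp
    next
      case F: False
      show ?thesis
      proof (cases "k = i")
        case True
        then show ?thesis using nv nl np k lvs' lps' si sj r assms(9,10)
          by (auto simp: admissible_seg_def)
      next
        case False
        then have "k + (j - i) < length ls" using k lls' assms(9,10) F by (auto simp: ls'_def)
        then show ?thesis using nv nl np k lvs' lps' seg[of "k + (j - i)"] F False by simp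
      qed
    qed
  next
    have "vs \<noteq> []" using len by auto
    then show "hd vs' \<in> uncovered V M1 - uncovered V M2" using cw
      by (simp add: vs'_def hd_append hd_take)
  next
    have "drop (Suc j) vs \<noteq> []" using len assms(10) by simp
    then show "last vs' \<in> uncovered V M2 - uncovered V M1" using cw
      by (simp add: vs'_def)
  next
    show "distinct vs'" unfolding vs'_def using cw assms(9)
      by (intro distinct_take_drop) auto
  next
    fix k assume k: "Suc k < length ls'"
    have alt: "\<And>k. Suc k < length ls \<Longrightarrow> ls ! Suc k \<noteq> ls ! k" using cw by blast
    show "ls' ! Suc k \<noteq> ls' ! k"
    proof (cases "Suc k < i")
      case True
      then show ?thesis using nl k alt[of k] assms(9,10) by simp
    next
      case F: False
      show ?thesis
      proof (cases "Suc k = i")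
        case True
        then show ?thesis using nl k alt[of k] assms(9,10,11) by simp
      next
        case F2: False
        show ?thesis
        proof (cases "k = i")
          case True
          have "Suc j < length ls" using k lls' assms(9,10) True by (auto simp: ls'_def)
          then show ?thesis using nl k alt[of j] assms(9,10,12) True by simp
        next
          case False
          then have "Suc k + (j - i) < length ls" using k lls' assms(9,10) F F2 by (auto simp: ls'_def)
          then show ?thesis using nl k alt[of "k + (j - i)"] F F2 False by simp
        qed
      qed
    qed
  qed
  then have "clap V E1 E2 M1 M2 vs' ls'" unfolding clap_def by blast
  moreover have "hd vs' = hd vs" "last vs' = last vs"
    using len assms(10) by (auto simp: vs'_def hd_append hd_take)
  ultimately show ?thesis using lls' by blast
qed

end
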